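(* Let $P=\langle(\mathcal Q,\le),N\rangle$ be a possibilistic normal program such that $(\mathcal Q,\le)$ is a totally ordered set and the language of $P$ has no extended (strongly negated) atoms. Then $M$ is a possibilistic answer set of $P$ if and only if $M$ is a possibilistic stable model of $P$.
   Context: $(\mathcal Q,\le)$ is a finite (here totally ordered) lattice with top $\top_{\mathcal Q}$. A possibilistic normal program is $P=\langle(\mathcal Q,\le),N\rangle$ where $N$ is a finite set of clauses $r=\alpha:a\leftarrow\mathcal B^+,not\ \mathcal B^-$ with exactly one head atom $a$, $\alpha\in\mathcal Q$; $n(r)=\alpha$, $r^*$ the underlying clause, $P^*=\{r^*\}$. Answer sets of $P^*$ are Gelfond–Lifschitz answer sets. $\mathcal{PS}$: sets of pairs (atom, element of $\mathcal Q$) with each atom at most once; $M^*$ its atoms; $A\sqsubseteq B$ iff $A^*\subseteq B^*$ and $\gamma\le\delta$ whenever $(x,\gamma)\in A,(x,\delta)\in B$. Reduct $P_M=\{n(r):(\{a\}\cap M)\leftarrow\mathcal B^+\mid r\in N, a\in M,\mathcal B^-\cap M=\emptyset,\mathcal B^+\subseteq M\}$. $\vdash_{PL}$ is necessity-valued possibilistic-logic inference (clauses read as weighted implications; classical axioms weighted $\top_{\mathcal Q}$; rules $(\varphi\ \gamma),(\varphi\to\psi\ \delta)\vdash(\psi\ \min\{\gamma,\delta\})$ and weakening $(\varphi\ \gamma)\vdash(\varphi\ \epsilon)$ for $\epsilon\le\gamma$). $P\Vvdash_{PL}M$ iff $M^*$ is an answer set of $P^*$ and $P_{M^*}\vdash_{PL}(a\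 \gamma)$ for all $(a,\gamma)\in M$. $M$ is a possibilistic answer set iff $M^*$ is an answer set of $P^*$, $P\Vvdash_{PL}M$, and there is no $M''\ne M$ in $\mathcal{PS}$ with $M\sqsubseteq M''$ and $P\Vvdash_{PL}M''$. Possibilistic stable models (Nicolas et al.): for a set of atoms $S$, the reduct $P^S=\{n(r):a\leftarrow\mathcal B^+\mid r\in N,\ \mathcal B^-\cap S=\emptyset\}$; for a definite possibilistic program $D$ and $A\in\mathcal{PS}$, $T_D(A)$ assigns to each atom $a$ that is the head of some $r\in D$ with $\mathcal B^+(r)\subseteq A^*$ the value $\max$ over such $r$ of $\min(\{n(r)\}\cup\{\beta:(b,\beta)\in A,b\in\mathcal B^+(r)\})$; $Cn(D)$ is the least fixpoint of $T_D$ obtained by iterating from $\emptyset$. $M$ is a possibilistic stable model of $P$ iff $M=Cn(P^{M^*})$. *)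

theory Defs
  imports Main
begin

text \<open>A possibilistic normal clause  alpha : a <- B+, not B-.  Bodies are given as lists
  (finite sets of atoms); only their sets matter.  The lattice Q is the type 'q,
  a finite linear order with top.\<close>

datatype ('a, 'q) pclause =
  PClause (weight: 'q) (head: 'a) (pos: "'a list") (neg: "'a list")

type_synonym ('a, 'q) pprogram = "('a, 'q) pclause set"

definition gl_reduct :: "('a, 'q) pprogram \<Rightarrow> 'a set \<Rightarrow> ('a \<times> 'a set) set" where
  "gl_reduct N S = {(head r, set (pos r)) | r. r \<in> N \<and> set (neg r) \<inter> S = {}}"

definition least_model :: "('a \<times> 'a set) set \<Rightarrow> 'a set" where
  "least_model D = \<Inter> {S. \<forall>(h, B) \<in> D. B \<subseteq> S \<longrightarrow> h \<in> S}"

definition answer_set :: "('a, 'q) pprogram \<Rightarrow> 'a set \<Rightarrow> bool" where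
  "answer_set N S \<longleftrightarrow> S = least_model (gl_reduct N S)"

definition is_PS :: "('a \<times> 'q) set \<Rightarrow> bool" where
  "is_PS M \<longleftrightarrow> (\<forall>x g d. (x, g) \<in> M \<longrightarrow> (x, d) \<in> M \<longrightarrow> g = d)"

definition atoms_of :: "('a \<times> 'q) set \<Rightarrow> 'a set" where
  "atoms_of M = fst ` M"

definition ps_le :: "('a \<times> 'q::order) set \<Rightarrow> ('a \<times> 'q) set \<Rightarrow> bool" where
  "ps_le A B \<longleftrightarrow> atoms_of A \<subseteq> atoms_of B \<and>
     (\<forall>x g d. (x, g) \<in> A \<longrightarrow> (x, d) \<in> B \<longrightarrow> g \<le> d)"

datatype 'a form = FTop | FAtom 'a | FNot "'a form" | FAnd "'a form" "'a form"
  | FOr "'a form" "'a form" | FImp "'a form" "'a form"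

fun feval :: "('a \<Rightarrow> bool) \<Rightarrow> 'a form \<Rightarrow> bool" where
  "feval v FTop = True"
| "feval v (FAtom a) = v a"
| "feval v (FNot f) = (\<not> feval v f)"
| "feval v (FAnd f g) = (feval v f \<and> feval v g)"
| "feval v (FOr f g) = (feval v f \<or> feval v g)"
| "feval v (FImp f g) = (feval v f \<longrightarrow> feval v g)"

definition tautology :: "'a form \<Rightarrow> bool" where
  "tautology f \<longleftrightarrow> (\<forall>v. feval v f)"

definition clause_form :: "'a list \<Rightarrow> 'a \<Rightarrow> 'a form" where
  "clause_form bs a = FImp (foldr (\<lambda>b f. FAnd (FAtom b) f) bs FTop) (FAtom a)"

inductive pl_derives :: "('q \<times> 'a form) set \<Rightarrow> 'a form \<Rightarrow> 'q::{linorder, order_top} \<Rightarrow> bool"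
  for \<Gamma> where
  pl_premise: "(\<alpha>, \<phi>) \<in> \<Gamma> \<Longrightarrow> pl_derives \<Gamma> \<phi> \<alpha>"
| pl_axiom: "tautology \<phi> \<Longrightarrow> pl_derives \<Gamma> \<phi> top"
| pl_mp: "pl_derives \<Gamma> \<phi> \<gamma> \<Longrightarrow> pl_derives \<Gamma> (FImp \<phi> \<psi>) \<delta> \<Longrightarrow> pl_derives \<Gamma> \<psi> (min \<gamma> \<delta>)"
| pl_weak: "pl_derives \<Gamma> \<phi> \<gamma> \<Longrightarrow> \<epsilon> \<le> \<gamma> \<Longrightarrow> pl_derives \<Gamma> \<phi> \<epsilon>"

definition poss_reduct :: "('a, 'q) pprogram \<Rightarrow> 'a set \<Rightarrow> ('q \<times> 'a form) set" where
  "poss_reduct N S = {(weight r, clause_form (pos r) (head r)) | r.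
      r \<in> N \<and> head r \<in> S \<and> set (neg r) \<inter> S = {} \<and> set (pos r) \<subseteq> S}"

definition pl_entails :: "('a, 'q::{linorder, order_top}) pprogram \<Rightarrow> ('a \<times> 'q) set \<Rightarrow> bool" where
  "pl_entails N M \<longleftrightarrow> answer_set N (atoms_of M) \<and>
     (\<forall>(a, \<gamma>) \<in> M. pl_derives (poss_reduct N (atoms_of M)) (FAtom a) \<gamma>)"

definition poss_answer_set :: "('a, 'q::{linorder, order_top}) pprogram \<Rightarrow> ('a \<times> 'q) set \<Rightarrow> bool" where
  "poss_answer_set N M \<longleftrightarrow> is_PS M \<and> answer_set N (atoms_of M) \<and> pl_entails N M \<and>
     \<not> (\<exists>M''. is_PS M'' \<and> M'' \<noteq> M \<and> ps_le M M'' \<and> pl_entails N M'')"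

definition stable_reduct :: "('a, 'q) pprogram \<Rightarrow> 'a set \<Rightarrow> ('a, 'q) pprogram" where
  "stable_reduct N S = {PClause (weight r) (head r) (pos r) [] | r. r \<in> N \<and> set (neg r) \<inter> S = {}}"

definition rule_val :: "('a \<times> 'q::linorder) set \<Rightarrow> ('a, 'q) pclause \<Rightarrow> 'q" where
  "rule_val A r = Min (insert (weight r) {\<beta>. \<exists>b \<in> set (pos r). (b, \<beta>) \<in> A})"

definition T_op :: "('a, 'q::linorder) pprogram \<Rightarrow> ('a \<times> 'q) set \<Rightarrow> ('a \<times> 'q) set" where
  "T_op D A = {(a, Max {rule_val A r | r. r \<in> D \<and> head r = a \<and> set (pos r) \<subseteq> atoms_of A}) | a.
      \<exists>r \<in> D. head r = a \<and> set (pos r) \<subseteq> atoms_of A}"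

definition Cn :: "('a, 'q::linorder) pprogram \<Rightarrow> ('a \<times> 'q) set" where
  "Cn D = (THE A. \<exists>n. A = (T_op D ^^ n) {} \<and> T_op D A = A)"

definition poss_stable_model :: "('a, 'q::linorder) pprogram \<Rightarrow> ('a \<times> 'q) set \<Rightarrow> bool" where
  "poss_stable_model N M \<longleftrightarrow> M = Cn (stable_reduct N (atoms_of M))"

end

theory Submission
  imports Defs
begin

definition wcut :: "('a, 'q::linorder) pprogram \<Rightarrow> 'q \<Rightarrow> ('a, 'q) pprogram" where
  "wcut D g = {r \<in> D. g \<le> weight r}"

inductive_set hlm :: "('a, 'q) pprogram \<Rightarrow> 'a set" for D where
  hlmI: "r \<in> D \<Longrightarrow> \<forall>b\<in>set (pos r). b \<in> hlm D \<Longrightarrow> head r \<in> hlm D"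

lemma hlmI': "r \<in> D \<Longrightarrow> set (pos r) \<subseteq> hlm D \<Longrightarrow> head r \<in> hlm D"
  by (rule hlmI) blast+

lemma hlm_sim:
  assumes "\<forall>r\<in>D. \<exists>r'\<in>D'. head r' = head r \<and> set (pos r') \<subseteq> set (pos r)"
  shows "hlm D \<subseteq> hlm D'"
proof
  fix x assume "x \<in> hlm D"
  then show "x \<in> hlm D'"
  proof induct
    case (hlmI r)
    then obtain r' where "r' \<in> D'" "head r' = head r" "set (pos r') \<subseteq> set (pos r)"
      using assms by blast
    then show ?case using hlmI hlmI'[of r' D'] by auto
  qed
qed

lemma hlm_mono: "D \<subseteq> D' \<Longrightarrow> hlm D \<subseteq> hlm D'"
  by (rule hlm_sim) blast

lemma wcut_anti: "g \<le> b \<Longrightarrow> wcut D b \<subseteq> wcut D g"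
  unfolding wcut_def by auto

lemma wcut_mono: "D \<subseteq> D' \<Longrightarrow> wcut D g \<subseteq> wcut D' g"
  unfolding wcut_def by auto

lemma wcut_sub: "wcut D g \<subseteq> D"
  unfolding wcut_def by auto

lemma wcut_min: "wcut D (Min (UNIV :: 'q::{finite,linorder} set)) = D"
  unfolding wcut_def by auto

lemma least_model_hlm:
  "least_model {(head r, set (pos r)) | r. r \<in> D} = hlm D"
proof
  have "hlm D \<in> {S. \<forall>(h, B) \<in> {(head r, set (pos r)) | r. r \<in> D}. B \<subseteq> S \<longrightarrow> h \<in> S}"
    by (auto intro: hlmI')
  then show "least_model {(head r, set (pos r)) | r. r \<in> D} \<subseteq> hlm D"
    unfolding least_model_def by blast
next
  show "hlm D \<subseteq> least_model {(head r, set (pos r)) | r. r \<in> D}"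
  proof
    fix x assume "x \<in> hlm D"
    then show "x \<in> least_model {(head r, set (pos r)) | r. r \<in> D}"
    proof induct
      case (hlmI r)
      show ?case unfolding least_model_def
      proof (rule InterI)
        fix S assume S: "S \<in> {S. \<forall>(h, B) \<in> {(head r, set (pos r)) | r. r \<in> D}. B \<subseteq> S \<longrightarrow> h \<in> S}"
        have "set (pos r) \<subseteq> least_model {(head r, set (pos r)) | r. r \<in> D}" using hlmI(2) by blast
        then have "set (pos r) \<subseteq> S" using S unfolding least_model_def by blast
        moreover have "(head r, set (pos r)) \<in> {(head r, set (pos r)) | r. r \<in> D}" using hlmI(1) by blast
        ultimately show "head r \<in> S" using S by blast
      qed
    qed
  qed
qed

definition RS :: "('a, 'q) pprogram \<Rightarrow> 'a set \<Rightarrow> ('a, 'q) pprogram" where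
  "RS N S = {r \<in> N. set (neg r) \<inter> S = {}}"

definition RP :: "('a, 'q) pprogram \<Rightarrow> 'a set \<Rightarrow> ('a, 'q) pprogram" where
  "RP N S = {r \<in> N. head r \<in> S \<and> set (neg r) \<inter> S = {} \<and> set (pos r) \<subseteq> S}"

lemma answer_set_hlm: "answer_set N S \<longleftrightarrow> S = hlm (RS N S)"
proof -
  have "gl_reduct N S = {(head r, set (pos r)) | r. r \<in> RS N S}"
    unfolding gl_reduct_def RS_def by blast
  then show ?thesis unfolding answer_set_def by (simp add: least_model_hlm)
qed

lemma answer_set_antichain:
  assumes "answer_set N S" "answer_set N S'" "S \<subseteq> S'"
  shows "S' = S"
proof -
  have "RS N S' \<subseteq> RS N S" using assms(3) unfolding RS_def by blast
  then have "hlm (RS N S') \<subseteq> hlm (RS N S)" by (rule hlm_mono)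
  then show ?thesis using assms by (simp add: answer_set_hlm)
qed

section \<open>Possibilistic logic\<close>

lemma feval_conj:
  "feval v (foldr (\<lambda>b f. FAnd (FAtom b) f) bs FTop) \<longleftrightarrow> (\<forall>b\<in>set bs. v b)"
  by (induction bs) auto

lemma pl_sound:
  assumes "pl_derives \<Gamma> \<phi> g"
  shows "(\<forall>a \<psi>. (a, \<psi>) \<in> \<Gamma> \<longrightarrow> g \<le> a \<longrightarrow> feval v \<psi>) \<Longrightarrow> feval v \<phi>"
  using assms
proof (induction rule: pl_derives.induct)
  case (pl_premise a \<phi>)
  then show ?case by blast
next
  case (pl_axiom \<phi>)
  then show ?case by (simp add: tautology_def)
next
  case (pl_mp \<phi> g \<psi> d)
  have "feval v \<phi>" using pl_mp.IH(1) pl_mp.prems by (meson min.cobounded1 order_trans)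
  moreover have "feval v (FImp \<phi> \<psi>)" using pl_mp.IH(2) pl_mp.prems by (meson min.cobounded2 order_trans)
  ultimately show ?case by simp
next
  case (pl_weak \<phi> g e)
  then show ?case by (meson order_trans)
qed

lemma pl_conj:
  "(\<forall>b\<in>set bs. pl_derives \<Gamma> (FAtom b) g) \<Longrightarrow> pl_derives \<Gamma> (foldr (\<lambda>b f. FAnd (FAtom b) f) bs FTop) g"
proof (induction bs)
  case Nil
  have "pl_derives \<Gamma> FTop top" by (rule pl_axiom) (simp add: tautology_def)
  then show ?case using pl_weak[OF _ top_greatest] by simp
next
  case (Cons b bs)
  let ?f = "foldr (\<lambda>b f. FAnd (FAtom b) f) bs FTop"
  have t: "pl_derives \<Gamma> (FImp (FAtom b) (FImp ?f (FAnd (FAtom b) ?f))) top"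
    by (rule pl_axiom) (simp add: tautology_def)
  have "pl_derives \<Gamma> (FAtom b) g" using Cons.prems by simp
  from pl_mp[OF this t] have "pl_derives \<Gamma> (FImp ?f (FAnd (FAtom b) ?f)) g" by simp
  moreover have "pl_derives \<Gamma> ?f g" using Cons by simp
  ultimately have "pl_derives \<Gamma> (FAnd (FAtom b) ?f) (min g g)" by (rule pl_mp[rotated])
  then show ?case by simp
qed

lemma poss_reduct_RP:
  "poss_reduct N S = {(weight r, clause_form (pos r) (head r)) | r. r \<in> RP N S}"
  unfolding poss_reduct_def RP_def by blast

lemma pl_to_hlm:
  assumes "pl_derives (poss_reduct N S) (FAtom a) g"
  shows "a \<in> hlm (wcut (RP N S) g)"
proof -
  have "feval (\<lambda>x. x \<in> hlm (wcut (RP N S) g)) (FAtom a)"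
  proof (rule pl_sound[OF assms], intro allI impI)
    fix al \<psi> assume "(al, \<psi>) \<in> poss_reduct N S" "g \<le> al"
    then obtain r where r: "r \<in> RP N S" "al = weight r" "\<psi> = clause_form (pos r) (head r)"
      unfolding poss_reduct_RP by blast
    then have "r \<in> wcut (RP N S) g" using \<open>g \<le> al\<close> unfolding wcut_def by simp
    then show "feval (\<lambda>x. x \<in> hlm (wcut (RP N S) g)) \<psi>"
      using r by (auto simp: clause_form_def feval_conj intro: hlmI')
  qed
  then show ?thesis by simp
qed

lemma hlm_to_pl:
  assumes "a \<in> hlm (wcut (RP N S) g)"
  shows "pl_derives (poss_reduct N S) (FAtom a) g"
  using assms
proof induct
  case (hlmI r)
  have c: "pl_derives (poss_reduct N S) (foldr (\<lambda>b f. FAnd (FAtom b) f) (pos r) FTop) g"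
    using hlmI(2) by (intro pl_conj) blast
  have "r \<in> RP N S" "g \<le> weight r" using hlmI(1) unfolding wcut_def by auto
  then have "(weight r, clause_form (pos r) (head r)) \<in> poss_reduct N S"
    unfolding poss_reduct_RP by blast
  then have "pl_derives (poss_reduct N S) (clause_form (pos r) (head r)) (weight r)"
    by (rule pl_premise)
  then have "pl_derives (poss_reduct N S) (clause_form (pos r) (head r)) g"
    using \<open>g \<le> weight r\<close> by (rule pl_weak)
  from pl_mp[OF c this[unfolded clause_form_def]] show ?case by simp
qed

lemma hlm_RP_RS:
  assumes "S = hlm (RS N S)"
  shows "hlm (wcut (RP N S) g) = hlm (wcut (RS N S) g)"
proof
  show "hlm (wcut (RP N S) g) \<subseteq> hlm (wcut (RS N S) g)"
    by (intro hlm_mono wcut_mono) (auto simp: RP_def RS_def)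
next
  show "hlm (wcut (RS N S) g) \<subseteq> hlm (wcut (RP N S) g)"
  proof
    fix x assume "x \<in> hlm (wcut (RS N S) g)"
    then show "x \<in> hlm (wcut (RP N S) g)"
    proof induct
      case (hlmI r)
      have sub: "hlm (wcut (RP N S) g) \<subseteq> S"
        using assms hlm_mono[of "wcut (RP N S) g" "RS N S"] wcut_sub[of "RP N S" g]
        by (auto simp: RP_def RS_def)
      have rr: "r \<in> RS N S" "g \<le> weight r" using hlmI(1) unfolding wcut_def by auto
      have ps: "set (pos r) \<subseteq> S" using hlmI(2) sub by blast
      then have "head r \<in> S" using assms rr by (metis hlmI')
      then have "r \<in> wcut (RP N S) g" using rr ps unfolding wcut_def RP_def RS_def by auto
      then show ?case using hlmI(2) by (blast intro: hlmI')
    qed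
  qed
qed

lemma pl_iff:
  assumes "S = hlm (RS N S)"
  shows "pl_derives (poss_reduct N S) (FAtom a) g \<longleftrightarrow> a \<in> hlm (wcut (RS N S) g)"
  using pl_to_hlm hlm_to_pl hlm_RP_RS[OF assms] by metis


section \<open>Fixpoint semantics\<close>

lemma atoms_mem: "x \<in> atoms_of A \<longleftrightarrow> (\<exists>g. (x, g) \<in> A)"
  unfolding atoms_of_def by force

lemma atoms_I: "(x, g) \<in> A \<Longrightarrow> x \<in> atoms_of A"
  unfolding atoms_of_def by force

lemma atoms_E: "x \<in> atoms_of A \<Longrightarrow> \<exists>g. (x, g) \<in> A"
  unfolding atoms_of_def by force

lemma T_mem: "(a, g) \<in> T_op D A \<longleftrightarrow> (\<exists>r\<in>D. head r = a \<and> set (pos r) \<subseteq> atoms_of A) \<and>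
   g = Max {rule_val A r | r. r \<in> D \<and> head r = a \<and> set (pos r) \<subseteq> atoms_of A}"
  unfolding T_op_def by blast

lemma rule_val_le_w: "rule_val A r \<le> weight (r :: ('a, 'q::{finite,linorder}) pclause)"
  unfolding rule_val_def by (rule Min_le) auto

lemma rule_val_le_b: "b \<in> set (pos r) \<Longrightarrow> (b, be) \<in> A \<Longrightarrow> rule_val A (r :: ('a, 'q::{finite,linorder}) pclause) \<le> be"
  unfolding rule_val_def by (rule Min_le) auto

lemma rule_val_ge:
  assumes "d \<le> weight (r :: ('a, 'q::{finite,linorder}) pclause)"
    "\<And>b be. b \<in> set (pos r) \<Longrightarrow> (b, be) \<in> A \<Longrightarrow> d \<le> be"
  shows "d \<le> rule_val A r"
  unfolding rule_val_def using assms by (subst Min_ge_iff) auto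

lemma T_PS: "is_PS (T_op D A)"
  unfolding is_PS_def T_mem by blast

lemma T_atoms: "T_op D A \<subseteq> head ` D \<times> UNIV"
  unfolding T_op_def by auto

lemma Max_RV_in:
  fixes D :: "('a, 'q::{finite,linorder}) pprogram"
  assumes "\<exists>r\<in>D. head r = a \<and> set (pos r) \<subseteq> atoms_of A"
  shows "Max {rule_val A r | r. r \<in> D \<and> head r = a \<and> set (pos r) \<subseteq> atoms_of A}
     \<in> {rule_val A r | r. r \<in> D \<and> head r = a \<and> set (pos r) \<subseteq> atoms_of A}"
  by (rule Max_in) (use assms in auto)

lemma Max_RV_ge:
  fixes D :: "('a, 'q::{finite,linorder}) pprogram"
  assumes "r \<in> D" "head r = a" "set (pos r) \<subseteq> atoms_of A"
  shows "rule_val A r \<le> Max {rule_val A r | r. r \<in> D \<and> head r = a \<and> set (pos r) \<subseteq> atoms_of A}"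
  by (rule Max_ge) (use assms in auto)

lemma rule_val_mono:
  assumes "ps_le A B" "set (pos r) \<subseteq> atoms_of A"
  shows "rule_val A r \<le> rule_val B (r :: ('a, 'q::{finite,linorder}) pclause)"
proof (rule rule_val_ge)
  show "rule_val A r \<le> weight r" by (rule rule_val_le_w)
next
  fix b be assume b: "b \<in> set (pos r)" "(b, be) \<in> B"
  then obtain g where g: "(b, g) \<in> A" using assms(2) atoms_mem by (metis subsetD)
  then have "g \<le> be" using assms(1) b unfolding ps_le_def by blast
  moreover have "rule_val A r \<le> g" using rule_val_le_b[OF b(1) g] .
  ultimately show "rule_val A r \<le> be" by simp
qed

lemma T_mono:
  fixes D :: "('a, 'q::{finite,linorder}) pprogram"
  assumes "ps_le A B"
  shows "ps_le (T_op D A) (T_op D B)"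
  unfolding ps_le_def
proof (intro conjI allI impI)
  have ab: "atoms_of A \<subseteq> atoms_of B" using assms unfolding ps_le_def by blast
  show "atoms_of (T_op D A) \<subseteq> atoms_of (T_op D B)"
  proof
    fix x assume "x \<in> atoms_of (T_op D A)"
    then obtain r where "r \<in> D" "head r = x" "set (pos r) \<subseteq> atoms_of A"
      by (auto simp: atoms_mem T_mem)
    then have "\<exists>r\<in>D. head r = x \<and> set (pos r) \<subseteq> atoms_of B" using ab by blast
    then show "x \<in> atoms_of (T_op D B)" by (auto simp: atoms_mem T_mem)
  qed
  fix x g d assume xg: "(x, g) \<in> T_op D A" and xd: "(x, d) \<in> T_op D B"
  from xg have e: "\<exists>r\<in>D. head r = x \<and> set (pos r) \<subseteq> atoms_of A"
    and gM: "g = Max {rule_val A r | r. r \<in> D \<and> head r = x \<and> set (pos r) \<subseteq> atoms_of A}"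
    by (auto simp: T_mem)
  from xd have dM: "d = Max {rule_val B r | r. r \<in> D \<and> head r = x \<and> set (pos r) \<subseteq> atoms_of B}"
    by (auto simp: T_mem)
  from Max_RV_in[OF e] gM obtain r where r: "r \<in> D" "head r = x" "set (pos r) \<subseteq> atoms_of A"
    "g = rule_val A r" by auto
  have "rule_val A r \<le> rule_val B r" using rule_val_mono[OF assms r(3)] .
  also have "\<dots> \<le> d" unfolding dM using r ab by (intro Max_RV_ge) auto
  finally show "g \<le> d" using r by simp
qed

lemma ps_le_refl: "is_PS A \<Longrightarrow> ps_le A A"
  unfolding ps_le_def is_PS_def by auto

lemma ps_le_trans: "ps_le A B \<Longrightarrow> ps_le B C \<Longrightarrow> ps_le A (C :: ('a \<times> 'q::order) set)"
  unfolding ps_le_def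
proof (intro conjI allI impI)
  assume AB: "atoms_of A \<subseteq> atoms_of B \<and> (\<forall>x g d. (x, g) \<in> A \<longrightarrow> (x, d) \<in> B \<longrightarrow> g \<le> d)"
    and BC: "atoms_of B \<subseteq> atoms_of C \<and> (\<forall>x g d. (x, g) \<in> B \<longrightarrow> (x, d) \<in> C \<longrightarrow> g \<le> d)"
  then show "atoms_of A \<subseteq> atoms_of C" by blast
  fix x g d assume xg: "(x, g) \<in> A" and xd: "(x, d) \<in> C"
  have "x \<in> atoms_of B" using xg AB atoms_mem by (metis subsetD)
  then obtain e where e: "(x, e) \<in> B" using atoms_mem by metis
  show "g \<le> d" using AB BC xg xd e by (meson order_trans)
qed

lemma ps_le_antisym:
  assumes "is_PS A" "is_PS B" "ps_le A B" "ps_le B (A :: ('a \<times> 'q::order) set)"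
  shows "A = B"
proof -
  have "A \<subseteq> B" if "is_PS A" "is_PS B" "ps_le A B" "ps_le B A" for A B :: "('a \<times> 'q) set"
  proof
    fix p assume p: "p \<in> A"
    obtain x g where [simp]: "p = (x, g)" by fastforce
    have "x \<in> atoms_of A" using p atoms_I by simp
    then have "x \<in> atoms_of B" using that(3) unfolding ps_le_def by blast
    then obtain d where d: "(x, d) \<in> B" using atoms_mem by metis
    have "g \<le> d" "d \<le> g" using that(3,4) p d unfolding ps_le_def by auto
    then show "p \<in> B" using d by simp
  qed
  then show ?thesis using assms by blast
qed

abbreviation it :: "('a, 'q::linorder) pprogram \<Rightarrow> nat \<Rightarrow> ('a \<times> 'q) set" where
  "it D n \<equiv> (T_op D ^^ n) {}"

lemma PS_empty: "is_PS {}"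
  by (simp add: is_PS_def)

lemma it_PS: "is_PS (it D n)"
  by (cases n) (simp_all add: T_PS PS_empty)

lemma it_chain:
  fixes D :: "('a, 'q::{finite,linorder}) pprogram"
  shows "ps_le (it D n) (it D (Suc n))"
proof (induction n)
  case 0 then show ?case by (simp add: ps_le_def atoms_of_def)
next
  case (Suc n) then show ?case using T_mono by simp
qed

lemma it_le:
  fixes D :: "('a, 'q::{finite,linorder}) pprogram"
  shows "i \<le> j \<Longrightarrow> ps_le (it D i) (it D j)"
proof (induction j)
  case 0 then show ?case by (simp add: ps_le_def atoms_of_def)
next
  case (Suc j)
  show ?case
  proof (cases "i = Suc j")
    case True then show ?thesis using ps_le_refl[OF it_PS[of "Suc j" D]] by simp
  next
    case False
    then have "i \<le> j" using Suc.prems by simp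
    then have "ps_le (it D i) (it D j)" by (rule Suc.IH)
    then show ?thesis using ps_le_trans[OF _ it_chain[of j D]] by simp
  qed
qed

lemma it_fix_exists:
  fixes D :: "('a, 'q::{finite,linorder}) pprogram"
  assumes "finite D"
  shows "\<exists>n. T_op D (it D n) = it D n"
proof (rule ccontr)
  assume nf: "\<not> ?thesis"
  have "inj (it D)"
  proof (rule injI)
    have *: False if "i < j" "it D i = it D j" for i j
    proof -
      have "ps_le (it D (Suc i)) (it D i)" using it_le[of "Suc i" j D] that by simp
      moreover have "ps_le (it D i) (it D (Suc i))" by (rule it_chain)
      ultimately have "it D (Suc i) = it D i" using ps_le_antisym[OF it_PS[of "Suc i" D] it_PS[of i D]] by simp
      then show False using nf by simp
    qed
    fix i j assume "it D i = it D j"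
    then show "i = j" using * by (metis linorder_neqE_nat)
  qed
  moreover have "range (it D) \<subseteq> Pow (head ` D \<times> (UNIV :: 'q set))"
  proof
    fix A assume "A \<in> range (it D)"
    then obtain n where "A = it D n" by blast
    then show "A \<in> Pow (head ` D \<times> UNIV)" using T_atoms by (cases n) auto
  qed
  moreover have "finite (Pow (head ` D \<times> (UNIV :: 'q set)))" using assms by simp
  ultimately have "finite (UNIV :: nat set)" by (meson finite_imageD finite_subset)
  then show False by simp
qed

lemma it_stable:
  assumes fx: "T_op D (it D n) = it D n"
  shows "n \<le> m \<Longrightarrow> it D m = it D n"
proof (induction m)
  case 0 then show ?case by simp
next
  case (Suc m)
  show ?case
  proof (cases "n \<le> m")
    case True
    then have "it D m = it D n" by (rule Suc.IH)
    then have "it D (Suc m) = T_op D (it D n)" by simp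
    then show ?thesis using fx by simp
  next
    case False
    then have "n = Suc m" using Suc.prems by simp
    then show ?thesis by simp
  qed
qed

lemma Cn_fix:
  fixes D :: "('a, 'q::{finite,linorder}) pprogram"
  assumes "finite D"
  shows "\<exists>n. Cn D = it D n \<and> T_op D (Cn D) = Cn D"
proof -
  obtain n where n: "T_op D (it D n) = it D n" using it_fix_exists[OF assms] by blast
  have "Cn D = it D n"
    unfolding Cn_def
  proof (rule the_equality)
    show "\<exists>m. it D n = it D m \<and> T_op D (it D n) = it D n" using n by blast
  next
    fix A assume "\<exists>m. A = it D m \<and> T_op D A = A"
    then obtain m where m: "A = it D m" "T_op D A = A" by blast
    have "it D (max m n) = A" using it_stable[of D m "max m n"] m by simp
    moreover have "it D (max m n) = it D n" using it_stable[OF n, of "max m n"] by simp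
    ultimately show "A = it D n" by simp
  qed
  then show ?thesis using n by (intro exI[of _ n]) simp
qed

lemma T_sound:
  fixes D :: "('a, 'q::{finite,linorder}) pprogram"
  assumes IH: "\<And>a g. (a, g) \<in> A \<Longrightarrow> a \<in> hlm (wcut D g)"
    and ag: "(a, g) \<in> T_op D A"
  shows "a \<in> hlm (wcut D g)"
proof -
  from ag have e: "\<exists>r\<in>D. head r = a \<and> set (pos r) \<subseteq> atoms_of A"
    and gM: "g = Max {rule_val A r | r. r \<in> D \<and> head r = a \<and> set (pos r) \<subseteq> atoms_of A}"
    by (auto simp: T_mem)
  from Max_RV_in[OF e] gM obtain r where r: "r \<in> D" "head r = a" "set (pos r) \<subseteq> atoms_of A"
    "g = rule_val A r" by auto
  have "r \<in> wcut D g" using r rule_val_le_w[of A r] unfolding wcut_def by simp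
  moreover have "set (pos r) \<subseteq> hlm (wcut D g)"
  proof
    fix b assume b: "b \<in> set (pos r)"
    then obtain be where be: "(b, be) \<in> A" using r(3) atoms_mem by (metis subsetD)
    have "g \<le> be" using rule_val_le_b[OF b be] r by simp
    then show "b \<in> hlm (wcut D g)" using IH[OF be] hlm_mono[OF wcut_anti[OF \<open>g \<le> be\<close>, of D]] by blast
  qed
  ultimately show ?thesis using hlmI' r(2) by metis
qed

lemma it_sound:
  fixes D :: "('a, 'q::{finite,linorder}) pprogram"
  shows "(a, g) \<in> it D n \<Longrightarrow> a \<in> hlm (wcut D g)"
proof (induction n arbitrary: a g)
  case 0 then show ?case by simp
next
  case (Suc n) then show ?case using T_sound[of "it D n" D a g] by simp
qed

lemma fix_complete:
  fixes D :: "('a, 'q::{finite,linorder}) pprogram"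
  assumes ps: "is_PS F" and fx: "T_op D F = F"
  shows "a \<in> hlm (wcut D d) \<Longrightarrow> \<exists>g\<ge>d. (a, g) \<in> F"
proof (induction rule: hlm.induct)
  case (hlmI r)
  have rr: "r \<in> D" "d \<le> weight r" using hlmI(1) unfolding wcut_def by auto
  have sub: "set (pos r) \<subseteq> atoms_of F"
  proof
    fix b assume "b \<in> set (pos r)"
    then obtain g where "(b, g) \<in> F" using hlmI(2) by blast
    then show "b \<in> atoms_of F" by (rule atoms_I)
  qed
  have e: "\<exists>r'\<in>D. head r' = head r \<and> set (pos r') \<subseteq> atoms_of F" using rr sub by blast
  let ?M = "Max {rule_val F r' | r'. r' \<in> D \<and> head r' = head r \<and> set (pos r') \<subseteq> atoms_of F}"
  have "(head r, ?M) \<in> T_op D F" using e by (simp add: T_mem)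
  then have inF: "(head r, ?M) \<in> F" using fx by simp
  have "d \<le> rule_val F r"
  proof (rule rule_val_ge[OF rr(2)])
    fix b be assume b: "b \<in> set (pos r)" "(b, be) \<in> F"
    then obtain g where "g \<ge> d" "(b, g) \<in> F" using hlmI(2) by blast
    then show "d \<le> be" using ps b unfolding is_PS_def by metis
  qed
  also have "\<dots> \<le> ?M" using rr sub by (intro Max_RV_ge) auto
  finally show ?case using inF by blast
qed

lemma Cn_char:
  fixes D :: "('a, 'q::{finite,linorder}) pprogram"
  assumes "finite D"
  shows "(a, g) \<in> Cn D \<longleftrightarrow> a \<in> hlm (wcut D g) \<and> (\<forall>d. a \<in> hlm (wcut D d) \<longrightarrow> d \<le> g)"
proof -
  obtain n where n: "Cn D = it D n" "T_op D (Cn D) = Cn D" using Cn_fix[OF assms] by blast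
  have ps: "is_PS (Cn D)" using n(1) it_PS[of n D] by simp
  have snd: "a \<in> hlm (wcut D g)" if "(a, g) \<in> Cn D" for a g using it_sound that n(1) by metis
  note cmp = fix_complete[OF ps n(2)]
  show ?thesis
  proof
    assume ag: "(a, g) \<in> Cn D"
    have "d \<le> g" if ad: "a \<in> hlm (wcut D d)" for d
    proof -
      obtain g' where "g' \<ge> d" "(a, g') \<in> Cn D" using cmp[OF ad] by blast
      then show ?thesis using ps ag unfolding is_PS_def by metis
    qed
    then show "a \<in> hlm (wcut D g) \<and> (\<forall>d. a \<in> hlm (wcut D d) \<longrightarrow> d \<le> g)" using snd[OF ag] by blast
  next
    assume r: "a \<in> hlm (wcut D g) \<and> (\<forall>d. a \<in> hlm (wcut D d) \<longrightarrow> d \<le> g)"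
    obtain g' where g': "g' \<ge> g" "(a, g') \<in> Cn D" using cmp[of a g] r by blast
    then have "g' \<le> g" using snd[OF g'(2)] r by blast
    then show "(a, g) \<in> Cn D" using g' by (metis order_antisym)
  qed
qed

lemma Cn_PS:
  fixes D :: "('a, 'q::{finite,linorder}) pprogram"
  assumes "finite D"
  shows "is_PS (Cn D)"
proof -
  obtain n where "Cn D = it D n" using Cn_fix[OF assms] by blast
  then show ?thesis using it_PS[of n D] by simp
qed

lemma Cn_atoms:
  fixes D :: "('a, 'q::{finite,linorder}) pprogram"
  assumes "finite D"
  shows "atoms_of (Cn D) = hlm D"
proof
  show "atoms_of (Cn D) \<subseteq> hlm D"
  proof
    fix a assume "a \<in> atoms_of (Cn D)"
    then obtain g where "(a, g) \<in> Cn D" using atoms_mem by metis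
    then have "a \<in> hlm (wcut D g)" using Cn_char[OF assms, of a g] by blast
    then show "a \<in> hlm D" using hlm_mono[OF wcut_sub[of D g]] by blast
  qed
next
  obtain n where n: "Cn D = it D n" "T_op D (Cn D) = Cn D" using Cn_fix[OF assms] by blast
  have ps: "is_PS (Cn D)" using n(1) it_PS[of n D] by simp
  show "hlm D \<subseteq> atoms_of (Cn D)"
  proof
    fix a assume "a \<in> hlm D"
    then have "a \<in> hlm (wcut D (Min UNIV))" by (simp add: wcut_min)
    then obtain g where "(a, g) \<in> Cn D" using fix_complete[OF ps n(2)] by blast
    then show "a \<in> atoms_of (Cn D)" by (rule atoms_I)
  qed
qed


lemma stable_reduct_img:
  "stable_reduct N S = (\<lambda>r. PClause (weight r) (head r) (pos r) []) ` RS N S"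
  unfolding stable_reduct_def RS_def by blast

lemma hlm_stable:
  "hlm (wcut (stable_reduct N S) g) = hlm (wcut (RS N S) g)"
proof
  show "hlm (wcut (stable_reduct N S) g) \<subseteq> hlm (wcut (RS N S) g)"
  proof (rule hlm_sim, rule ballI)
    fix r assume "r \<in> wcut (stable_reduct N S) g"
    then obtain r0 where "r0 \<in> RS N S" "r = PClause (weight r0) (head r0) (pos r0) []" "g \<le> weight r"
      unfolding wcut_def stable_reduct_img by blast
    then show "\<exists>r'\<in>wcut (RS N S) g. head r' = head r \<and> set (pos r') \<subseteq> set (pos r)"
      unfolding wcut_def by (intro bexI[of _ r0]) auto
  qed
next
  show "hlm (wcut (RS N S) g) \<subseteq> hlm (wcut (stable_reduct N S) g)"
  proof (rule hlm_sim, rule ballI)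
    fix r assume r: "r \<in> wcut (RS N S) g"
    then have "PClause (weight r) (head r) (pos r) [] \<in> wcut (stable_reduct N S) g"
      unfolding wcut_def stable_reduct_img by auto
    then show "\<exists>r'\<in>wcut (stable_reduct N S) g. head r' = head r \<and> set (pos r') \<subseteq> set (pos r)"
      by (intro bexI[of _ "PClause (weight r) (head r) (pos r) []"]) auto
  qed
qed

theorem proposition5:
  fixes N :: "('a, 'q::{finite, linorder, order_top}) pprogram"
    and M :: "('a \<times> 'q) set"
  assumes "finite N"
  shows "poss_answer_set N M \<longleftrightarrow> poss_stable_model N M"
proof -
  define S where "S = atoms_of M"
  define D where "D = stable_reduct N S"
  define C where "C = Cn D"
  define H where "H = (\<lambda>g. hlm (wcut (RS N S) g))"
  have fD: "finite D"
  proof -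
    have "RS N S \<subseteq> N" unfolding RS_def by blast
    then have "finite (RS N S)" using assms finite_subset by blast
    then show ?thesis unfolding D_def stable_reduct_img by simp
  qed
  have Cchar: "(a, g) \<in> C \<longleftrightarrow> a \<in> H g \<and> (\<forall>d. a \<in> H d \<longrightarrow> d \<le> g)" for a g
    unfolding C_def H_def using Cn_char[OF fD, of a g] hlm_stable[of N S] unfolding D_def by simp
  have Catoms: "atoms_of C = hlm (RS N S)"
    unfolding C_def using Cn_atoms[OF fD] hlm_stable[of N S "Min UNIV"] unfolding D_def wcut_min
    by simp
  have CPS: "is_PS C" unfolding C_def by (rule Cn_PS[OF fD])
  have Cent: "pl_entails N C" if AS: "S = hlm (RS N S)"
  proof -
    have aC: "atoms_of C = S" using Catoms AS by simp
    have "answer_set N (atoms_of C)" using aC AS answer_set_hlm by metis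
    moreover have "pl_derives (poss_reduct N (atoms_of C)) (FAtom a) g" if "(a, g) \<in> C" for a g
      using that Cchar[of a g] pl_iff[OF AS, of a g] aC unfolding H_def by simp
    ultimately show ?thesis unfolding pl_entails_def by blast
  qed
  show ?thesis
  proof
    assume pas: "poss_answer_set N M"
    then have PS: "is_PS M" and ans: "answer_set N S" and ent: "pl_entails N M"
      and max: "\<not> (\<exists>M''. is_PS M'' \<and> M'' \<noteq> M \<and> ps_le M M'' \<and> pl_entails N M'')"
      unfolding poss_answer_set_def S_def by auto
    have AS: "S = hlm (RS N S)" using ans answer_set_hlm by metis
    have Mlev: "a \<in> H g" if "(a, g) \<in> M" for a g
    proof -
      have "pl_derives (poss_reduct N S) (FAtom a) g" using ent that unfolding pl_entails_def S_def by blast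
      then show ?thesis using pl_iff[OF AS] unfolding H_def by blast
    qed
    have aC: "atoms_of C = S" using Catoms AS by simp
    have "ps_le M C"
      unfolding ps_le_def
    proof (intro conjI allI impI)
      show "atoms_of M \<subseteq> atoms_of C" using aC S_def by simp
      fix x g d assume "(x, g) \<in> M" "(x, d) \<in> C"
      then show "g \<le> d" using Mlev Cchar by blast
    qed
    then have "C = M" using max CPS Cent[OF AS] by blast
    then show "poss_stable_model N M" unfolding poss_stable_model_def C_def D_def S_def by simp
  next
    assume "poss_stable_model N M"
    then have MC: "M = C" unfolding poss_stable_model_def C_def D_def S_def by simp
    have AS: "S = hlm (RS N S)" using Catoms MC S_def by simp
    have ans: "answer_set N S" using AS answer_set_hlm by metis
    have notex: "\<not> (\<exists>M''. is_PS M'' \<and> M'' \<noteq> M \<and> ps_le M M'' \<and> pl_entails N M'')"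
    proof
      assume "\<exists>M''. is_PS M'' \<and> M'' \<noteq> M \<and> ps_le M M'' \<and> pl_entails N M''"
      then obtain M'' where M'': "is_PS M''" "M'' \<noteq> M" "ps_le M M''" "pl_entails N M''" by blast
      have ans2: "answer_set N (atoms_of M'')" using M''(4) unfolding pl_entails_def by blast
      have "S \<subseteq> atoms_of M''" using M''(3) unfolding ps_le_def S_def by blast
      then have S2: "atoms_of M'' = S" using answer_set_antichain[OF ans ans2] by simp
      have eqv: "(x, d) \<in> M''" if xg: "(x, g) \<in> M" and xd: "(x, d) \<in> M''" for x g d
        using xd .
      have key: "(x, d) \<in> M" if xd: "(x, d) \<in> M''" for x d
      proof -
        have "pl_derives (poss_reduct N S) (FAtom x) d"
          using M''(4) xd S2 unfolding pl_entails_def by auto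
        then have xH: "x \<in> H d" using pl_iff[OF AS] unfolding H_def by blast
        have "x \<in> S" using xd S2 atoms_I by metis
        then obtain g where xg: "(x, g) \<in> M" unfolding S_def using atoms_E by metis
        then have "d \<le> g" using xH Cchar MC by blast
        moreover have "g \<le> d" using M''(3) xg xd unfolding ps_le_def by blast
        ultimately show ?thesis using xg by simp
      qed
      have "M'' = M"
      proof
        show "M'' \<subseteq> M" using key by auto
        show "M \<subseteq> M''"
        proof
          fix p assume p: "p \<in> M"
          obtain x g where pxg: "p = (x, g)" by fastforce
          have "x \<in> atoms_of M''" using p pxg S2 S_def atoms_I by metis
          then obtain d where xd: "(x, d) \<in> M''" using atoms_E by metis
          then have "(x, d) \<in> M" by (rule key)
          then have "d = g" using p pxg MC CPS unfolding is_PS_def by blast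
          then show "p \<in> M''" using xd pxg by simp
        qed
      qed
      then show False using M''(2) by simp
    qed
    have "pl_entails N M" using Cent[OF AS] MC by simp
    moreover have "is_PS M" using CPS MC by simp
    ultimately show "poss_answer_set N M"
      unfolding poss_answer_set_def using ans notex S_def by blast
  qed
qed

end
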